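(* Let $W=q^{\Delta^2/2}\Gamma'_{-}(Qq^{-\rho})^{-1}\Gamma_{-}(q^{-\rho})^{-1}q^{-\Delta^2/2}$ and $L=W\Lambda W^{-1}$. Then $$L=(\Lambda-q^\Delta)(1+Qq^{\Delta-1}\Lambda^{-1})^{-1}=(1+Qq^{\Delta}\Lambda^{-1})^{-1}(\Lambda-q^\Delta),$$ where $(1+Qq^{\Delta-1}\Lambda^{-1})^{-1}=\sum_{n\ge0}(-Qq^{\Delta-1}\Lambda^{-1})^n$ and similarly for $(1+Qq^\Delta\Lambda^{-1})^{-1}$.
   Context: Let $0<|q|<1$, $0<|Q|<1$, with a fixed $q^{1/2}$. Work with $\mathbb{Z}\times\mathbb{Z}$ matrices; $\Delta=\sum_{i\in\mathbb{Z}}iE_{ii}$, $\Lambda=\sum_{i\in\mathbb{Z}}E_{i,i+1}$, $f(\Delta)=\sum_if(i)E_{ii}$ (e.g. $q^{\Delta}$, $q^{\Delta-1}$, $q^{\Delta^2/2}=\sum_iq^{i^2/2}E_{ii}$). For a parameter $a$, $\Gamma_{-}(aq^{-\rho})=\prod_{i\ge1}(1-aq^{i-1/2}\Lambda^{-1})^{-1}$ with $(1-x\Lambda^{-1})^{-1}=\sum_{n\ge0}x^n\Lambda^{-n}$, and $\Gamma'_{-}(aq^{-\rho})=\prod_{i\ge1}(1+aq^{i-1/2}\Lambda^{-1})$; $\Gamma_-(q^{-\rho})$ means $a=1$. Inverses are taken within lower triangular matrices. *)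

theory Defs
  imports "HOL-Analysis.Analysis"
begin

type_synonym cmat = "int \<Rightarrow> int \<Rightarrow> complex"

definition mmul :: "cmat \<Rightarrow> cmat \<Rightarrow> cmat" where
  "mmul A B = (\<lambda>i j. infsum (\<lambda>k. A i k * B k j) UNIV)"

definition mid :: cmat where
  "mid = (\<lambda>i j. if i = j then 1 else 0)"

definition mscale :: "complex \<Rightarrow> cmat \<Rightarrow> cmat" where
  "mscale c A = (\<lambda>i j. c * A i j)"

definition madd :: "cmat \<Rightarrow> cmat \<Rightarrow> cmat" where
  "madd A B = (\<lambda>i j. A i j + B i j)"

definition msub :: "cmat \<Rightarrow> cmat \<Rightarrow> cmat" where
  "msub A B = (\<lambda>i j. A i j - B i j)"

definition mdiag :: "(int \<Rightarrow> complex) \<Rightarrow> cmat" where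
  "mdiag f = (\<lambda>i j. if i = j then f i else 0)"

definition Lam :: cmat where
  "Lam = (\<lambda>i j. if j = i + 1 then 1 else 0)"

definition Laminv :: cmat where
  "Laminv = (\<lambda>i j. if i = j + 1 then 1 else 0)"

fun mpow :: "cmat \<Rightarrow> nat \<Rightarrow> cmat" where
  "mpow A 0 = mid"
| "mpow A (Suc n) = mmul (mpow A n) A"

definition mseries :: "(nat \<Rightarrow> cmat) \<Rightarrow> cmat" where
  "mseries F = (\<lambda>i j. \<Sum>n. F n i j)"

fun mprod :: "(nat \<Rightarrow> cmat) \<Rightarrow> nat \<Rightarrow> cmat" where
  "mprod F 0 = mid"
| "mprod F (Suc N) = mmul (mprod F N) (F (Suc N))"

definition lower_tri :: "cmat \<Rightarrow> bool" where
  "lower_tri A \<longleftrightarrow> (\<forall>i j. i < j \<longrightarrow> A i j = 0)"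

definition linv :: "cmat \<Rightarrow> cmat" where
  "linv A = (THE B. lower_tri B \<and> mmul A B = mid \<and> mmul B A = mid)"

text \<open>(1 - x Lambda^{-1})^{-1} = sum_{n>=0} x^n Lambda^{-n}\<close>
definition geom_inv :: "complex \<Rightarrow> cmat" where
  "geom_inv x = mseries (\<lambda>n. mscale (x ^ n) (mpow Laminv n))"

text \<open>s is the fixed square root q^{1/2}, so a q^{k-1/2} = a s^(2k-1).
  Infinite products are entrywise limits of the finite partial products.\<close>
definition Gamma_minus :: "complex \<Rightarrow> complex \<Rightarrow> cmat" where
  "Gamma_minus s a = (\<lambda>i j. lim (\<lambda>N. mprod (\<lambda>k. geom_inv (a * s ^ (2 * k - 1))) N i j))"

definition Gamma_minus' :: "complex \<Rightarrow> complex \<Rightarrow> cmat" where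
  "Gamma_minus' s a = (\<lambda>i j. lim (\<lambda>N. mprod (\<lambda>k. madd mid (mscale (a * s ^ (2 * k - 1)) Laminv)) N i j))"

text \<open>q^{Delta^2/2} = sum_i q^{i^2/2} E_ii = sum_i s^{i^2} E_ii\<close>
definition qhalfsq :: "complex \<Rightarrow> cmat" where
  "qhalfsq s = mdiag (\<lambda>i. s ^ nat (i * i))"

definition qhalfsq_inv :: "complex \<Rightarrow> cmat" where
  "qhalfsq_inv s = mdiag (\<lambda>i. inverse (s ^ nat (i * i)))"

definition Wmat :: "complex \<Rightarrow> complex \<Rightarrow> cmat" where
  "Wmat s Q = mmul (mmul (mmul (qhalfsq s) (linv (Gamma_minus' s Q)))
                 (linv (Gamma_minus s 1))) (qhalfsq_inv s)"

definition Lmat :: "complex \<Rightarrow> complex \<Rightarrow> cmat" where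
  "Lmat s Q = mmul (mmul (Wmat s Q) Lam) (linv (Wmat s Q))"

end

theory Submission
  imports Defs "HOL-Computational_Algebra.Formal_Power_Series"
begin

unbundle no vec_syntax
unbundle fps_syntax


definition band :: "nat \<Rightarrow> cmat \<Rightarrow> bool" where
  "band d A \<longleftrightarrow> (\<forall>i j. i + int d < j \<longrightarrow> A i j = 0)"

lemma infsum_one_point:
  fixes f :: "int \<Rightarrow> complex"
  assumes "\<And>k. k \<noteq> kc \<Longrightarrow> f k = 0"
  shows "infsum f UNIV = f kc"
proof -
  have "infsum f UNIV = infsum f {kc}"
    by (rule infsum_cong_neutral) (auto simp: assms)
  also have "\<dots> = f kc" by simp
  finally show ?thesis .
qed

lemma mmul_fin:
  assumes "band d A" "band e B" "a \<le> j - int e" "i + int d \<le> b"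
  shows "mmul A B i j = (\<Sum>k=a..b. A i k * B k j)"
proof -
  have "mmul A B i j = infsum (\<lambda>k. A i k * B k j) {a..b}"
    unfolding mmul_def
  proof (rule infsum_cong_neutral)
    fix k assume "k \<in> UNIV - {a..b}"
    hence "k < a \<or> b < k" by auto
    thus "A i k * B k j = 0"
    proof
      assume "k < a" hence "k + int e < j" using assms by linarith
      thus ?thesis using assms(2) unfolding band_def by auto
    next
      assume "b < k" hence "i + int d < k" using assms by linarith
      thus ?thesis using assms(1) unfolding band_def by auto
    qed
  qed auto
  thus ?thesis by simp
qed

lemma band_mono: "band d A \<Longrightarrow> d \<le> e \<Longrightarrow> band e A"
  unfolding band_def by force

lemma band_mmul: "band d A \<Longrightarrow> band e B \<Longrightarrow> band (d+e) (mmul A B)"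
  unfolding band_def[of "d+e"]
proof (intro allI impI)
  fix i j assume A: "band d A" and B: "band e B" and ij: "i + int (d + e) < j"
  have "mmul A B i j = (\<Sum>k=j - int e..i + int d. A i k * B k j)"
    by (rule mmul_fin[OF A B]) auto
  also have "\<dots> = 0" using ij by simp
  finally show "mmul A B i j = 0" .
qed

lemma mmul_assoc:
  assumes A: "band d A" and B: "band e B" and C: "band f C"
  shows "mmul (mmul A B) C = mmul A (mmul B C)"
proof (intro ext)
  fix i j
  let ?K1 = "{j - int f..i + int d + int e}" and ?K2 = "{j - int e - int f..i + int d}"
  have AB: "band (d+e) (mmul A B)" using band_mmul[OF A B] .
  have BC: "band (e+f) (mmul B C)" using band_mmul[OF B C] .
  have "mmul (mmul A B) C i j = (\<Sum>k\<in>?K1. mmul A B i k * C k j)"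
    by (rule mmul_fin[OF AB C]) auto
  also have "\<dots> = (\<Sum>k\<in>?K1. (\<Sum>l\<in>?K2. A i l * B l k) * C k j)"
  proof (rule sum.cong[OF refl])
    fix k assume "k \<in> ?K1"
    thus "mmul A B i k * C k j = (\<Sum>l\<in>?K2. A i l * B l k) * C k j"
      by (subst mmul_fin[OF A B, of "j - int e - int f" k i "i + int d"]) auto
  qed
  also have "\<dots> = (\<Sum>k\<in>?K1. \<Sum>l\<in>?K2. A i l * B l k * C k j)"
    by (simp add: sum_distrib_right)
  also have "\<dots> = (\<Sum>l\<in>?K2. \<Sum>k\<in>?K1. A i l * B l k * C k j)"
    by (rule sum.swap)
  also have "\<dots> = (\<Sum>l\<in>?K2. A i l * (\<Sum>k\<in>?K1. B l k * C k j))"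
    by (simp add: sum_distrib_left mult.assoc)
  also have "\<dots> = (\<Sum>l\<in>?K2. A i l * mmul B C l j)"
  proof (rule sum.cong[OF refl])
    fix l assume "l \<in> ?K2"
    thus "A i l * (\<Sum>k\<in>?K1. B l k * C k j) = A i l * mmul B C l j"
      by (subst mmul_fin[OF B C, of "j - int f" j l "i + int d + int e"]) auto
  qed
  also have "\<dots> = mmul A (mmul B C) i j"
    by (rule mmul_fin[OF A BC, symmetric]) auto
  finally show "mmul (mmul A B) C i j = mmul A (mmul B C) i j" .
qed

lemma band_msub: "band d A \<Longrightarrow> band d B \<Longrightarrow> band d (msub A B)"
  unfolding band_def msub_def by auto

lemma mmul_msub_right:
  assumes "band d X" "band e A" "band e B"
  shows "mmul X (msub A B) = msub (mmul X A) (mmul X B)"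
proof (intro ext)
  fix i j
  have "mmul X (msub A B) i j = (\<Sum>k=j - int e..i + int d. X i k * msub A B k j)"
    by (rule mmul_fin[OF assms(1) band_msub[OF assms(2,3)]]) auto
  also have "\<dots> = (\<Sum>k=j - int e..i + int d. X i k * A k j) - (\<Sum>k=j - int e..i + int d. X i k * B k j)"
    by (simp add: msub_def right_diff_distrib sum_subtractf)
  also have "\<dots> = msub (mmul X A) (mmul X B) i j"
    unfolding msub_def
    by (simp add: mmul_fin[OF assms(1) assms(2), of "j - int e" j i "i + int d"]
                  mmul_fin[OF assms(1) assms(3), of "j - int e" j i "i + int d"])
  finally show "mmul X (msub A B) i j = msub (mmul X A) (mmul X B) i j" .
qed

lemma mmul_msub_left:
  assumes "band d X" "band e A" "band e B"
  shows "mmul (msub A B) X = msub (mmul A X) (mmul B X)"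
proof (intro ext)
  fix i j
  have "mmul (msub A B) X i j = (\<Sum>k=j - int d..i + int e. msub A B i k * X k j)"
    by (rule mmul_fin[OF band_msub[OF assms(2,3)] assms(1)]) auto
  also have "\<dots> = (\<Sum>k=j - int d..i + int e. A i k * X k j) - (\<Sum>k=j - int d..i + int e. B i k * X k j)"
    by (simp add: msub_def left_diff_distrib sum_subtractf)
  also have "\<dots> = msub (mmul A X) (mmul B X) i j"
    unfolding msub_def
    by (simp add: mmul_fin[OF assms(2) assms(1), of "j - int d" j i "i + int e"]
                  mmul_fin[OF assms(3) assms(1), of "j - int d" j i "i + int e"])
  finally show "mmul (msub A B) X i j = msub (mmul A X) (mmul B X) i j" .
qed

lemma mmul_mid_left [simp]: "mmul mid X = X"
proof (intro ext)
  fix i j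
  show "mmul mid X i j = (X) i j"
    unfolding mmul_def mid_def by (subst infsum_one_point[where kc="i"]) auto
qed

lemma mmul_mid_right [simp]: "mmul X mid = X"
proof (intro ext)
  fix i j
  show "mmul X mid i j = (X) i j"
    unfolding mmul_def mid_def by (subst infsum_one_point[where kc="j"]) auto
qed

lemma mmul_diag_left: "mmul (mdiag d) X = (\<lambda>i j. d i * X i j)"
proof (intro ext)
  fix i j
  show "mmul (mdiag d) X i j = ((\<lambda>i j. d i * X i j)) i j"
    unfolding mmul_def mdiag_def by (subst infsum_one_point[where kc="i"]) auto
qed

lemma mmul_diag_right: "mmul X (mdiag d) = (\<lambda>i j. X i j * d j)"
proof (intro ext)
  fix i j
  show "mmul X (mdiag d) i j = ((\<lambda>i j. X i j * d j)) i j"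
    unfolding mmul_def mdiag_def by (subst infsum_one_point[where kc="j"]) auto
qed

lemma mmul_Lam_left: "mmul Lam X = (\<lambda>i j. X (i+1) j)"
proof (intro ext)
  fix i j
  show "mmul Lam X i j = ((\<lambda>i j. X (i+1) j)) i j"
    unfolding mmul_def Lam_def by (subst infsum_one_point[where kc="i+1"]) auto
qed

lemma mmul_Lam_right: "mmul X Lam = (\<lambda>i j. X i (j-1))"
proof (intro ext)
  fix i j
  show "mmul X Lam i j = ((\<lambda>i j. X i (j-1))) i j"
    unfolding mmul_def Lam_def by (subst infsum_one_point[where kc="j-1"]) auto
qed

definition Msub :: "(int \<Rightarrow> complex) \<Rightarrow> cmat" where
  "Msub a = (\<lambda>i j. if i = j + 1 then a i else 0)"

lemma mmul_Msub_left: "mmul (Msub a) X = (\<lambda>i j. a i * X (i-1) j)"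
proof (intro ext)
  fix i j
  show "mmul (Msub a) X i j = ((\<lambda>i j. a i * X (i-1) j)) i j"
    unfolding mmul_def Msub_def by (subst infsum_one_point[where kc="i-1"]) auto
qed

lemma mmul_Msub_right: "mmul X (Msub a) = (\<lambda>i j. X i (j+1) * a (j+1))"
proof (intro ext)
  fix i j
  show "mmul X (Msub a) i j = ((\<lambda>i j. X i (j+1) * a (j+1))) i j"
    unfolding mmul_def Msub_def by (subst infsum_one_point[where kc="j+1"]) auto
qed

lemma band_mid: "band 0 mid" unfolding band_def mid_def by auto
lemma band_mdiag: "band 0 (mdiag d)" unfolding band_def mdiag_def by auto
lemma band_Lam: "band 1 Lam" unfolding band_def Lam_def by auto
lemma band_Msub: "band 0 (Msub a)" unfolding band_def Msub_def by auto




definition Tw :: "(int \<Rightarrow> complex) \<Rightarrow> complex fps \<Rightarrow> cmat" where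
  "Tw w a = (\<lambda>i j. if j \<le> i then w i * a $ nat (i - j) * inverse (w j) else 0)"

lemma band_Tw: "band 0 (Tw w a)" unfolding band_def Tw_def by auto

lemma lower_tri_band: "lower_tri A \<longleftrightarrow> band 0 A"
  unfolding lower_tri_def band_def by auto

lemma sum_int_reindex:
  assumes "j \<le> i"
  shows "(\<Sum>k=j..i. g k) = (\<Sum>m=0..nat (i - j). g (j + int m))"
  by (rule sum.reindex_bij_witness[of _ "\<lambda>m. j + int m" "\<lambda>k. nat (k - j)"]) (use assms in auto)

lemma Tw_mult:
  assumes w: "\<And>k. w k \<noteq> 0"
  shows "mmul (Tw w a) (Tw w b) = Tw w (a * b)"
proof (intro ext)
  fix i j
  have eq: "mmul (Tw w a) (Tw w b) i j = (\<Sum>k=j..i. Tw w a i k * Tw w b k j)"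
    by (rule mmul_fin[OF band_Tw band_Tw]) auto
  show "mmul (Tw w a) (Tw w b) i j = Tw w (a * b) i j"
  proof (cases "j \<le> i")
    case False
    thus ?thesis using eq by (simp add: Tw_def)
  next
    case True
    let ?n = "nat (i - j)"
    have "(\<Sum>k=j..i. Tw w a i k * Tw w b k j)
        = (\<Sum>k=j..i. w i * (a $ nat (i - k) * b $ nat (k - j)) * inverse (w j))"
      by (rule sum.cong[OF refl]) (auto simp: Tw_def w)
    also have "\<dots> = w i * (\<Sum>k=j..i. a $ nat (i - k) * b $ nat (k - j)) * inverse (w j)"
      by (simp add: sum_distrib_left sum_distrib_right)
    also have "(\<Sum>k=j..i. a $ nat (i - k) * b $ nat (k - j)) = (\<Sum>m=0..?n. a $ nat (i - (j + int m)) * b $ nat (j + int m - j))"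
      by (rule sum_int_reindex[OF True])
    also have "\<dots> = (\<Sum>m=0..?n. b $ m * a $ (?n - m))"
    proof (rule sum.cong[OF refl])
      fix m assume "m \<in> {0..?n}"
      hence "nat (i - (j + int m)) = ?n - m" using True by auto
      thus "a $ nat (i - (j + int m)) * b $ nat (j + int m - j) = b $ m * a $ (?n - m)" by simp
    qed
    also have "\<dots> = (b * a) $ ?n" by (simp add: fps_mult_nth)
    also have "\<dots> = (a * b) $ ?n" by (simp add: mult.commute)
    finally show ?thesis using eq True by (simp add: Tw_def)
  qed
qed

lemma Tw_one: "(\<And>k. w k \<noteq> 0) \<Longrightarrow> Tw w 1 = mid"
  unfolding Tw_def mid_def by (intro ext) auto

definition geo :: "complex \<Rightarrow> complex fps" where
  "geo x = Abs_fps (\<lambda>n. x ^ n)"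

definition lin :: "complex \<Rightarrow> complex fps" where
  "lin c = 1 + fps_const c * fps_X"

definition sc :: "complex \<Rightarrow> complex fps \<Rightarrow> complex fps" where
  "sc r a = Abs_fps (\<lambda>n. r ^ n * a $ n)"

lemma lin_nth: "lin c $ n = (if n = 0 then 1 else if n = 1 then c else 0)"
  unfolding lin_def by (cases n) auto

lemma lin_mult_nth0: "(lin c * a) $ 0 = a $ 0"
  unfolding lin_def by (simp add: distrib_right)

lemma lin_mult_nthSuc: "(lin c * a) $ Suc m = a $ Suc m + c * a $ m"
proof -
  have "lin c * a = a + fps_const c * (fps_X * a)"
    unfolding lin_def by (simp add: distrib_right mult.assoc)
  thus ?thesis by simp
qed

lemma sc_mult: "sc r (a * b) = sc r a * sc r b"
proof (rule fps_ext)
  fix n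
  have "sc r (a * b) $ n = (\<Sum>i=0..n. r ^ n * (a $ i * b $ (n - i)))"
    by (simp add: sc_def fps_mult_nth sum_distrib_left)
  also have "\<dots> = (\<Sum>i=0..n. (r ^ i * a $ i) * (r ^ (n - i) * b $ (n - i)))"
  proof (rule sum.cong[OF refl])
    fix i assume "i \<in> {0..n}"
    hence "r ^ n = r ^ i * r ^ (n - i)" by (simp add: power_add[symmetric])
    thus "r ^ n * (a $ i * b $ (n - i)) = (r ^ i * a $ i) * (r ^ (n - i) * b $ (n - i))"
      by (simp add: ac_simps)
  qed
  also have "\<dots> = (sc r a * sc r b) $ n" by (simp add: sc_def fps_mult_nth)
  finally show "sc r (a * b) $ n = (sc r a * sc r b) $ n" .
qed

lemma sc_geo: "sc r (geo x) = geo (r * x)"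
  unfolding sc_def geo_def by (rule arg_cong[where f=Abs_fps]) (simp add: fun_eq_iff power_mult_distrib)

lemma sc_lin: "sc r (lin c) = lin (r * c)"
  by (rule fps_ext) (auto simp: sc_def lin_nth)

lemma sc_one: "sc r 1 = 1"
  by (rule fps_ext) (auto simp: sc_def)

lemma geo_lin: "lin (- x) * geo x = 1"
proof (rule fps_ext)
  fix n show "(lin (- x) * geo x) $ n = 1 $ n"
    by (cases n) (auto simp: lin_nth lin_mult_nthSuc geo_def)
qed

lemma Laminv_Msub: "Laminv = Msub (\<lambda>_. 1)"
  unfolding Laminv_def Msub_def by auto

lemma mpow_Laminv: "mpow Laminv n = (\<lambda>i j. if i = j + int n then 1 else 0)"
proof (induction n)
  case 0 thus ?case by (auto simp: mid_def)
next
  case (Suc n)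
  have "mmul X Laminv = (\<lambda>i j. X i (j+1))" for X
    using mmul_Msub_right[of X "\<lambda>_. 1"] by (simp add: Laminv_Msub)
  thus ?case by (simp add: Suc) (auto intro!: ext)
qed

lemma geom_inv_Tw: "geom_inv x = Tw (\<lambda>_. 1) (geo x)"
proof (intro ext)
  fix i j
  have "geom_inv x i j = (\<Sum>n. x ^ n * (if i = j + int n then 1 else 0))"
    by (simp add: geom_inv_def mseries_def mscale_def mpow_Laminv)
  also have "\<dots> = Tw (\<lambda>_. 1) (geo x) i j"
  proof (cases "j \<le> i")
    case True
    have "(\<lambda>n. x ^ n * (if i = j + int n then 1 else 0)) = (\<lambda>n. if n = nat (i - j) then x ^ n else 0)"
      using True by (auto intro!: ext)
    hence "(\<lambda>n. x ^ n * (if i = j + int n then 1 else 0)) sums x ^ nat (i - j)"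
      using sums_single[of "nat (i - j)" "\<lambda>n. x ^ n"] by simp
    thus ?thesis using True by (simp add: sums_iff Tw_def geo_def)
  next
    case False
    have "(\<lambda>n. x ^ n * (if i = j + int n then 1 else 0)) = (\<lambda>n. 0)"
      using False by (auto intro!: ext)
    thus ?thesis using False by (simp add: Tw_def)
  qed
  finally show "geom_inv x i j = Tw (\<lambda>_. 1) (geo x) i j" .
qed

lemma lin_Tw: "madd mid (mscale c Laminv) = Tw (\<lambda>_. 1) (lin c)"
proof (intro ext)
  fix i j
  show "madd mid (mscale c Laminv) i j = Tw (\<lambda>_. 1) (lin c) i j"
  proof (cases "j \<le> i")
    case True
    then obtain n where n: "i = j + int n" by (metis le_iff_add zle_iff_zadd)
    show ?thesis using n
      by (cases n) (auto simp: madd_def mid_def mscale_def Laminv_def Tw_def lin_nth)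
  next
    case False thus ?thesis by (auto simp: madd_def mid_def mscale_def Laminv_def Tw_def)
  qed
qed

fun gpr :: "(nat \<Rightarrow> complex fps) \<Rightarrow> nat \<Rightarrow> complex fps" where
  "gpr G 0 = 1"
| "gpr G (Suc N) = gpr G N * G (Suc N)"

lemma mprod_Tw:
  assumes "\<And>k. F k = Tw (\<lambda>_. 1) (G k)"
  shows "mprod F N = Tw (\<lambda>_. 1) (gpr G N)"
  by (induction N) (simp_all add: assms Tw_mult Tw_one)




fun cg :: "complex \<Rightarrow> complex \<Rightarrow> nat \<Rightarrow> complex" where
  "cg s r 0 = 1"
| "cg s r (Suc m) = inverse s * r ^ m * cg s r m / (r ^ Suc m - 1)"

fun cgp :: "complex \<Rightarrow> complex \<Rightarrow> complex \<Rightarrow> nat \<Rightarrow> complex" where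
  "cgp s r Q 0 = 1"
| "cgp s r Q (Suc m) = Q * inverse s * cgp s r Q m / (r ^ Suc m - 1)"

lemma gpr_nth0: "(\<And>k. G k $ 0 = 1) \<Longrightarrow> gpr G N $ 0 = 1"
  by (induction N) auto

lemma geo_nth0: "geo x $ 0 = 1" by (simp add: geo_def)
lemma lin_nth0: "lin x $ 0 = 1" by (simp add: lin_nth)

context
  fixes s q Q :: complex
  assumes sq: "s ^ 2 = q" and q0: "q \<noteq> 0" and q1: "cmod q < 1"
begin

lemma s0: "s \<noteq> 0" using sq q0 by auto

lemma rho_pow_ne1: "inverse q ^ Suc m \<noteq> 1"
proof -
  have "1 < cmod (inverse q)" using q0 q1 by (simp add: norm_inverse one_less_inverse_iff)
  hence "1 < cmod (inverse q) ^ Suc m" by (rule one_less_power) simp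
  thus ?thesis by (metis norm_one norm_power order_less_irrefl)
qed

lemma qss: "q = s * s" using sq by (simp add: power2_eq_square)

lemma rho_pow_ne1': "inverse q * inverse q ^ m \<noteq> 1"
  using rho_pow_ne1[of m] by simp

lemma key1: "inverse q * (q ^ N * s) = q ^ N * inverse s"
  unfolding qss using s0 by (simp add: field_simps power_mult_distrib)
lemma key2: "q ^ Suc N * inverse s = q ^ N * s"
  unfolding qss using s0 by (simp add: field_simps power_mult_distrib)
lemma key3: "s ^ (2 * Suc N - 1) = q ^ N * s"
proof -
  have "2 * Suc N - 1 = Suc (2 * N)" by simp
  hence "s ^ (2 * Suc N - 1) = s ^ (2 * N) * s" by simp
  also have "s ^ (2 * N) = q ^ N" using sq by (simp add: power_mult)
  finally show ?thesis .
qed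

abbreviation "Gm N \<equiv> gpr (\<lambda>k. geo (s ^ (2 * k - 1))) N"
abbreviation "Gp N \<equiv> gpr (\<lambda>k. lin (Q * s ^ (2 * k - 1))) N"

lemma FI1: "lin (- inverse s) * sc (inverse q) (Gm N) = lin (- (q ^ N * inverse s)) * Gm N"
proof (induction N)
  case 0 thus ?case by (simp add: sc_one)
next
  case (Suc N)
  have G: "Gm (Suc N) = Gm N * geo (q ^ N * s)" by (simp only: gpr.simps key3)
  have "lin (- inverse s) * sc (inverse q) (Gm (Suc N))
      = (lin (- inverse s) * sc (inverse q) (Gm N)) * geo (q ^ N * inverse s)"
    unfolding G sc_mult sc_geo key1 by (simp add: mult.assoc)
  also have "\<dots> = Gm N * (lin (- (q ^ N * inverse s)) * geo (q ^ N * inverse s))"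
    unfolding Suc by (simp add: ac_simps)
  also have "\<dots> = Gm N" by (simp add: geo_lin)
  also have "\<dots> = Gm N * (lin (- (q ^ N * s)) * geo (q ^ N * s))" by (simp add: geo_lin)
  also have "\<dots> = lin (- (q ^ Suc N * inverse s)) * Gm (Suc N)"
    unfolding G key2 by (simp add: ac_simps)
  finally show ?case .
qed

lemma FI2: "lin (Q * (q ^ N * inverse s)) * sc (inverse q) (Gp N) = lin (Q * inverse s) * Gp N"
proof (induction N)
  case 0 thus ?case by (simp add: sc_one)
next
  case (Suc N)
  have G: "Gp (Suc N) = Gp N * lin (Q * (q ^ N * s))" by (simp only: gpr.simps key3)
  have r: "inverse q * (Q * (q ^ N * s)) = Q * (q ^ N * inverse s)"
    using key1 by (simp add: ac_simps)
  have "lin (Q * (q ^ Suc N * inverse s)) * sc (inverse q) (Gp (Suc N))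
      = lin (Q * (q ^ N * s)) * (lin (Q * (q ^ N * inverse s)) * sc (inverse q) (Gp N))"
    unfolding G sc_mult sc_lin key2 r by (simp add: ac_simps)
  also have "\<dots> = lin (Q * inverse s) * Gp (Suc N)"
    unfolding Suc G by (simp add: ac_simps)
  finally show ?case .
qed

lemma Gm_rec: "Gm N $ Suc m = (inverse s * inverse q ^ m - q ^ N * inverse s) * Gm N $ m / (inverse q ^ Suc m - 1)"
proof -
  have "(lin (- inverse s) * sc (inverse q) (Gm N)) $ Suc m = (lin (- (q ^ N * inverse s)) * Gm N) $ Suc m"
    by (simp only: FI1)
  hence "inverse q ^ Suc m * Gm N $ Suc m - inverse s * (inverse q ^ m * Gm N $ m)
        = Gm N $ Suc m - q ^ N * inverse s * Gm N $ m"
    by (simp add: lin_mult_nthSuc sc_def)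
  hence "Gm N $ Suc m * (inverse q ^ Suc m - 1) = (inverse s * inverse q ^ m - q ^ N * inverse s) * Gm N $ m"
    by (simp add: algebra_simps)
  thus ?thesis using rho_pow_ne1 by (simp add: field_simps)
qed

lemma Gp_rec: "Gp N $ Suc m = (Q * inverse s - Q * (q ^ N * inverse s) * inverse q ^ m) * Gp N $ m / (inverse q ^ Suc m - 1)"
proof -
  have "(lin (Q * (q ^ N * inverse s)) * sc (inverse q) (Gp N)) $ Suc m = (lin (Q * inverse s) * Gp N) $ Suc m"
    by (simp only: FI2)
  hence "inverse q ^ Suc m * Gp N $ Suc m + Q * (q ^ N * inverse s) * (inverse q ^ m * Gp N $ m)
        = Gp N $ Suc m + Q * inverse s * Gp N $ m"
    by (simp add: lin_mult_nthSuc sc_def)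
  hence "Gp N $ Suc m * (inverse q ^ Suc m - 1) = (Q * inverse s - Q * (q ^ N * inverse s) * inverse q ^ m) * Gp N $ m"
    by (simp add: algebra_simps)
  thus ?thesis using rho_pow_ne1 by (simp add: field_simps)
qed

lemma qN0: "(\<lambda>N. q ^ N) \<longlonglongrightarrow> 0" using q1 by (rule LIMSEQ_power_zero)

lemma Gm_lim: "(\<lambda>N. Gm N $ m) \<longlonglongrightarrow> cg s (inverse q) m"
proof (induction m)
  case 0 thus ?case by (simp add: gpr_nth0 geo_nth0)
next
  case (Suc m)
  have "(\<lambda>N. (inverse s * inverse q ^ m - q ^ N * inverse s) * Gm N $ m / (inverse q ^ Suc m - 1))
     \<longlonglongrightarrow> (inverse s * inverse q ^ m - 0 * inverse s) * cg s (inverse q) m / (inverse q ^ Suc m - 1)"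
    by (intro tendsto_intros qN0 Suc) (simp_all add: q1 rho_pow_ne1 rho_pow_ne1')
  moreover have "(\<lambda>N. Gm N $ Suc m) = (\<lambda>N. (inverse s * inverse q ^ m - q ^ N * inverse s) * Gm N $ m / (inverse q ^ Suc m - 1))"
    using Gm_rec by blast
  ultimately show ?case by simp
qed

lemma Gp_lim: "(\<lambda>N. Gp N $ m) \<longlonglongrightarrow> cgp s (inverse q) Q m"
proof (induction m)
  case 0 thus ?case by (simp add: gpr_nth0 lin_nth0)
next
  case (Suc m)
  have "(\<lambda>N. (Q * inverse s - Q * (q ^ N * inverse s) * inverse q ^ m) * Gp N $ m / (inverse q ^ Suc m - 1))
     \<longlonglongrightarrow> (Q * inverse s - Q * (0 * inverse s) * inverse q ^ m) * cgp s (inverse q) Q m / (inverse q ^ Suc m - 1)"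
    by (intro tendsto_intros qN0 Suc) (simp_all add: q1 rho_pow_ne1 rho_pow_ne1')
  moreover have "(\<lambda>N. Gp N $ Suc m) = (\<lambda>N. (Q * inverse s - Q * (q ^ N * inverse s) * inverse q ^ m) * Gp N $ m / (inverse q ^ Suc m - 1))"
    using Gp_rec by blast
  ultimately show ?case by simp
qed

lemma Gamma_minus_Tw: "Gamma_minus s 1 = Tw (\<lambda>_. 1) (Abs_fps (cg s (inverse q)))"
proof (intro ext)
  fix i j
  have mp: "mprod (\<lambda>k. geom_inv (1 * s ^ (2 * k - 1))) N = Tw (\<lambda>_. 1) (Gm N)" for N
    by (rule mprod_Tw) (simp add: geom_inv_Tw)
  show "Gamma_minus s 1 i j = Tw (\<lambda>_. 1) (Abs_fps (cg s (inverse q))) i j"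
  proof (cases "j \<le> i")
    case True
    thus ?thesis unfolding Gamma_minus_def mp using Gm_lim[of "nat (i - j)"]
      by (simp add: Tw_def limI)
  next
    case False
    thus ?thesis unfolding Gamma_minus_def mp by (simp add: Tw_def)
  qed
qed

lemma Gamma_minus'_Tw: "Gamma_minus' s Q = Tw (\<lambda>_. 1) (Abs_fps (cgp s (inverse q) Q))"
proof (intro ext)
  fix i j
  have mp: "mprod (\<lambda>k. madd mid (mscale (Q * s ^ (2 * k - 1)) Laminv)) N = Tw (\<lambda>_. 1) (Gp N)" for N
    by (rule mprod_Tw) (simp add: lin_Tw)
  show "Gamma_minus' s Q i j = Tw (\<lambda>_. 1) (Abs_fps (cgp s (inverse q) Q)) i j"
  proof (cases "j \<le> i")
    case True
    thus ?thesis unfolding Gamma_minus'_def mp using Gp_lim[of "nat (i - j)"]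
      by (simp add: Tw_def limI)
  next
    case False
    thus ?thesis unfolding Gamma_minus'_def mp by (simp add: Tw_def)
  qed
qed

lemma L1: "lin (- inverse s) * sc (inverse q) (Abs_fps (cg s (inverse q))) = Abs_fps (cg s (inverse q))"
proof (rule fps_ext)
  fix n show "(lin (- inverse s) * sc (inverse q) (Abs_fps (cg s (inverse q)))) $ n = Abs_fps (cg s (inverse q)) $ n"
  proof (cases n)
    case 0 thus ?thesis by (simp add: lin_nth sc_def)
  next
    case (Suc m)
    have d: "inverse q ^ Suc m - 1 \<noteq> 0" using rho_pow_ne1 by simp
    have e: "(inverse q ^ Suc m - 1) * cg s (inverse q) (Suc m) = inverse s * inverse q ^ m * cg s (inverse q) m"
      using d by (simp del: power_Suc)
    have "(lin (- inverse s) * sc (inverse q) (Abs_fps (cg s (inverse q)))) $ n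
       = inverse q ^ Suc m * cg s (inverse q) (Suc m) - inverse s * (inverse q ^ m * cg s (inverse q) m)"
      by (simp add: Suc lin_mult_nthSuc sc_def del: cg.simps power_Suc)
    also have "\<dots> = cg s (inverse q) (Suc m)" using e by (simp add: algebra_simps del: cg.simps power_Suc)
    finally show ?thesis using Suc by simp
  qed
qed

lemma L2: "sc (inverse q) (Abs_fps (cgp s (inverse q) Q)) = lin (Q * inverse s) * Abs_fps (cgp s (inverse q) Q)"
proof (rule fps_ext)
  fix n show "sc (inverse q) (Abs_fps (cgp s (inverse q) Q)) $ n = (lin (Q * inverse s) * Abs_fps (cgp s (inverse q) Q)) $ n"
  proof (cases n)
    case 0 thus ?thesis by (simp add: lin_nth sc_def)
  next
    case (Suc m)
    have d: "inverse q ^ Suc m - 1 \<noteq> 0" using rho_pow_ne1 by simp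
    have e: "(inverse q ^ Suc m - 1) * cgp s (inverse q) Q (Suc m) = Q * inverse s * cgp s (inverse q) Q m"
      using d by (simp del: power_Suc)
    have "(lin (Q * inverse s) * Abs_fps (cgp s (inverse q) Q)) $ n
       = cgp s (inverse q) Q (Suc m) + Q * inverse s * cgp s (inverse q) Q m"
      by (simp add: Suc lin_mult_nthSuc del: cgp.simps power_Suc)
    also have "\<dots> = inverse q ^ Suc m * cgp s (inverse q) Q (Suc m)" using e by (simp add: algebra_simps del: cgp.simps power_Suc)
    finally show ?thesis using Suc by (simp add: sc_def del: cgp.simps power_Suc)
  qed
qed

definition "ff = Abs_fps (cg s (inverse q)) * Abs_fps (cgp s (inverse q) Q)"

lemma ff_eq: "lin (- inverse s) * sc (inverse q) ff = lin (Q * inverse s) * ff"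
proof -
  have "lin (- inverse s) * sc (inverse q) ff
     = (lin (- inverse s) * sc (inverse q) (Abs_fps (cg s (inverse q)))) * sc (inverse q) (Abs_fps (cgp s (inverse q) Q))"
    by (simp add: ff_def sc_mult mult.assoc)
  also have "\<dots> = lin (Q * inverse s) * ff" by (simp only: L1 L2) (simp add: ff_def ac_simps)
  finally show ?thesis .
qed

lemma ff_rec: "inverse q ^ Suc m * ff $ Suc m - inverse s * (inverse q ^ m * ff $ m) = ff $ Suc m + Q * inverse s * ff $ m"
proof -
  have "(lin (- inverse s) * sc (inverse q) ff) $ Suc m = (lin (Q * inverse s) * ff) $ Suc m"
    by (simp only: ff_eq)
  thus ?thesis by (simp add: lin_mult_nthSuc sc_def)
qed

lemma ff0: "ff $ 0 = 1" by (simp add: ff_def)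

end



lemma linv_eq:
  assumes "lower_tri A" "lower_tri B" "mmul A B = mid" "mmul B A = mid"
  shows "linv A = B"
  unfolding linv_def
proof (rule the_equality)
  show "lower_tri B \<and> mmul A B = mid \<and> mmul B A = mid" using assms by auto
next
  fix B' assume B': "lower_tri B' \<and> mmul A B' = mid \<and> mmul B' A = mid"
  have bA: "band 0 A" and bB: "band 0 B" and bB': "band 0 B'"
    using assms B' by (auto simp: lower_tri_band)
  have "B' = mmul B' (mmul A B)" using assms by simp
  also have "\<dots> = mmul (mmul B' A) B" by (rule mmul_assoc[OF bB' bA bB, symmetric])
  also have "\<dots> = B" using B' by simp
  finally show "B' = B" .
qed

lemma linv_Tw:
  assumes "\<And>k. w k \<noteq> 0" "a $ 0 \<noteq> 0"
  shows "linv (Tw w a) = Tw w (inverse a)"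
  by (rule linv_eq) (simp_all add: lower_tri_band band_Tw Tw_mult assms Tw_one inverse_mult_eq_1 inverse_mult_eq_1')

definition prd :: "(int \<Rightarrow> complex) \<Rightarrow> int \<Rightarrow> nat \<Rightarrow> complex" where
  "prd a i n = (\<Prod>t<n. a (i - int t))"

definition Sm :: "(int \<Rightarrow> complex) \<Rightarrow> cmat" where
  "Sm a = (\<lambda>i j. if j \<le> i then prd a i (nat (i - j)) else 0)"

lemma mpow_Msub: "mpow (Msub a) n = (\<lambda>i j. if i = j + int n then prd a i n else 0)"
proof (induction n)
  case 0 thus ?case by (auto intro!: ext simp: mid_def prd_def)
next
  case (Suc n)
  show ?case
    by (simp add: Suc mmul_Msub_right prd_def) (auto intro!: ext simp: algebra_simps prd_def)
qed

lemma mseries_Msub: "mseries (\<lambda>n. mpow (Msub a) n) = Sm a"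
proof (intro ext)
  fix i j
  have "mseries (\<lambda>n. mpow (Msub a) n) i j = (\<Sum>n. if i = j + int n then prd a i n else 0)"
    by (simp add: mseries_def mpow_Msub)
  also have "\<dots> = Sm a i j"
  proof (cases "j \<le> i")
    case True
    have "(\<lambda>n. if i = j + int n then prd a i n else 0) = (\<lambda>n. if n = nat (i - j) then prd a i n else 0)"
      using True by (auto intro!: ext)
    hence "(\<lambda>n. if i = j + int n then prd a i n else 0) sums prd a i (nat (i - j))"
      using sums_single[of "nat (i - j)" "prd a i"] by simp
    thus ?thesis using True by (simp add: sums_iff Sm_def)
  next
    case False
    have "(\<lambda>n. if i = j + int n then prd a i n else 0) = (\<lambda>n. 0)"
      using False by (auto intro!: ext)
    thus ?thesis using False by (simp add: Sm_def)
  qed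
  finally show "mseries (\<lambda>n. mpow (Msub a) n) i j = Sm a i j" .
qed

lemma band_Sm: "band 0 (Sm a)" unfolding band_def Sm_def by auto

lemma Sm_left: "mmul (msub mid (Msub a)) (Sm a) = mid"
proof -
  have "mmul (msub mid (Msub a)) (Sm a) = msub (mmul mid (Sm a)) (mmul (Msub a) (Sm a))"
    by (rule mmul_msub_left[OF band_Sm band_mid band_Msub])
  also have "\<dots> = mid"
  proof (intro ext)
    fix i j
    show "msub (mmul mid (Sm a)) (mmul (Msub a) (Sm a)) i j = mid i j"
    proof (cases "j < i")
      case True
      then obtain k where k: "nat (i - j) = Suc k" by (metis Suc_pred' zero_less_nat_eq diff_gt_0_iff_gt)
      hence k2: "nat (i - 1 - j) = k" by auto
      have "prd a i (Suc k) = a i * prd a (i - 1) k"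
        unfolding prd_def by (subst prod.lessThan_Suc_shift) (simp add: algebra_simps)
      thus ?thesis using True k k2 by (simp add: msub_def mmul_Msub_left Sm_def) (simp add: mid_def)
    next
      case False thus ?thesis by (simp add: msub_def mmul_Msub_left Sm_def) (auto simp: mid_def prd_def)
    qed
  qed
  finally show ?thesis .
qed

lemma Sm_right: "mmul (Sm a) (msub mid (Msub a)) = mid"
proof -
  have "mmul (Sm a) (msub mid (Msub a)) = msub (mmul (Sm a) mid) (mmul (Sm a) (Msub a))"
    by (rule mmul_msub_right[OF band_Sm band_mid band_Msub])
  also have "\<dots> = mid"
  proof (intro ext)
    fix i j
    show "msub (mmul (Sm a) mid) (mmul (Sm a) (Msub a)) i j = mid i j"
    proof (cases "j < i")
      case True
      then obtain k where k: "nat (i - j) = Suc k" by (metis Suc_pred' zero_less_nat_eq diff_gt_0_iff_gt)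
      hence k2: "nat (i - (j + 1)) = k" by auto
      have "j + 1 = i - int k" using k by auto
      hence "prd a i (Suc k) = prd a i k * a (j + 1)"
        unfolding prd_def by simp
      thus ?thesis using True k k2 by (simp add: msub_def mmul_Msub_right Sm_def) (simp add: mid_def)
    next
      case False thus ?thesis by (simp add: msub_def mmul_Msub_right Sm_def) (auto simp: mid_def prd_def)
    qed
  qed
  finally show ?thesis .
qed

lemma M_Msub: "mscale c (mmul (mdiag d) Laminv) = Msub (\<lambda>i. c * d i)"
  by (simp add: mmul_diag_left mscale_def Laminv_def Msub_def) (auto intro!: ext)




lemma PE:
  fixes s :: complex
  assumes "s \<noteq> 0" "a + d - b = c + int n"
  shows "s powi a * inverse (s powi b) * s powi d = s powi c * s ^ n"
proof -
  have "s powi a * inverse (s powi b) * s powi d = s powi (a + d - b)"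
    using assms(1) by (simp add: power_int_add power_int_diff field_simps)
  also have "\<dots> = s powi c * s ^ n" using assms by (simp add: power_int_add)
  finally show ?thesis .
qed

lemma PE0:
  fixes s :: complex
  assumes "s \<noteq> 0" "a - b = c + int n"
  shows "s powi a * F * inverse (s powi b) = s powi c * s ^ n * F"
  using PE[OF assms(1), of a 0 b c n] assms(2) by (simp add: ac_simps)

lemma PE1:
  fixes s :: complex
  assumes "s \<noteq> 0" "a + d - b = c + int n"
  shows "s powi a * F * inverse (s powi b) * s powi d = s powi c * s ^ n * F"
  using PE[OF assms] by (simp add: ac_simps)

lemma wE: "(s::complex) ^ nat (k * k) = s powi (k * k)"
  by (simp add: power_int_def)

context
  fixes s q Q :: complex
  assumes sq: "s ^ 2 = q" and q0: "q \<noteq> 0" and q1: "cmod q < 1"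
begin

lemma s0': "s \<noteq> 0" using sq q0 by auto

abbreviation "wq \<equiv> (\<lambda>i::int. s ^ nat (i * i))"
abbreviation "Vm \<equiv> Tw wq (ff s q Q)"

lemma wf0: "wq k \<noteq> 0" using s0' by simp

lemma qpowi: "q powi j = s powi (2 * j)"
  using sq by (simp add: power_int_mult)

lemma hrec: "ff s q Q $ Suc m - s * ff s q Q $ m
     = s ^ (2*m+2) * ff s q Q $ Suc m + Q * s ^ (2*m+1) * ff s q Q $ m"
proof -
  let ?F1 = "ff s q Q $ Suc m" and ?F0 = "ff s q Q $ m"
  have r: "inverse q ^ Suc m * ?F1 - inverse s * (inverse q ^ m * ?F0) = ?F1 + Q * inverse s * ?F0"
    by (rule ff_rec[OF sq q0 q1])
  have qp: "q ^ k = s ^ (2 * k)" for k using sq by (simp add: power_mult)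
  have Y: "s ^ (2*m+2) \<noteq> 0" using s0' by simp
  have e1: "s ^ (2*m+2) * inverse q ^ Suc m = 1"
  proof -
    have "inverse q ^ Suc m = inverse (s ^ (2 * Suc m))" by (simp only: power_inverse qp)
    also have "2 * Suc m = 2*m+2" by simp
    finally have "inverse q ^ Suc m = inverse (s ^ (2*m+2))" .
    thus ?thesis using Y by (metis mult.commute field_class.field_inverse)
  qed
  have e2: "s ^ (2*m+2) * inverse q ^ m = s * s"
    using s0' by (simp add: power_inverse qp power_add field_simps)
  have "s ^ (2*m+2) * (inverse q ^ Suc m * ?F1 - inverse s * (inverse q ^ m * ?F0))
      = s ^ (2*m+2) * (?F1 + Q * inverse s * ?F0)" using r by simp
  hence H: "(s ^ (2*m+2) * inverse q ^ Suc m) * ?F1 - inverse s * (s ^ (2*m+2) * inverse q ^ m) * ?F0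
      = s ^ (2*m+2) * ?F1 + Q * (s ^ (2*m+2) * inverse s) * ?F0"
    by (simp add: algebra_simps)
  have e3: "s ^ (2*m+2) * inverse s = s ^ (2*m+1)" using s0' by (simp add: field_simps)
  have e4: "inverse s * (s * s) = s" using s0' by (simp add: field_simps)
  from H[unfolded e1 e2 e3 e4] show ?thesis by simp
qed

lemma I1entry:
  "Vm (i+1) j - Vm (i+1) (j+1) * (- Q * q powi j) = Vm i (j-1) - Vm i j * q powi j"
proof (cases "j \<le> i")
  case True
  then obtain m where i: "i = j + int m" by (metis le_iff_add zle_iff_zadd)
  let ?F1 = "ff s q Q $ Suc m" and ?F0 = "ff s q Q $ m"
  let ?c = "(j + int m) * (j + int m) - (j - 1) * (j - 1)"
  let ?B = "s powi ?c"
  have n1: "nat (j + int m + 1 - j) = Suc m" by simp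
  have n2: "nat (j + int m + 1 - (j + 1)) = m" by simp
  have n3: "nat (j + int m - (j - 1)) = Suc m" by simp
  have n4: "nat (j + int m - j) = m" by simp
  have f1: "Vm (i+1) j = ?B * s ^ (2*m+2) * ?F1"
  proof -
    have "Vm (i+1) j = s powi ((j + int m + 1) * (j + int m + 1)) * ?F1 * inverse (s powi (j * j))"
      unfolding i Tw_def wE n1 by simp
    also have "\<dots> = ?B * s ^ (2*m+2) * ?F1"
      by (rule PE0[OF s0']) (simp add: algebra_simps)
    finally show ?thesis .
  qed
  have f2: "Vm (i+1) (j+1) * q powi j = ?B * s ^ (2*m+1) * ?F0"
  proof -
    have "Vm (i+1) (j+1) * q powi j = s powi ((j + int m + 1) * (j + int m + 1)) * ?F0 * inverse (s powi ((j+1) * (j+1))) * s powi (2 * j)"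
      unfolding i Tw_def wE n2 qpowi by simp
    also have "\<dots> = ?B * s ^ (2*m+1) * ?F0"
      by (rule PE1[OF s0']) (simp add: algebra_simps)
    finally show ?thesis .
  qed
  have f3: "Vm i (j-1) = ?B * s ^ 0 * ?F1"
  proof -
    have "Vm i (j-1) = s powi ((j + int m) * (j + int m)) * ?F1 * inverse (s powi ((j-1) * (j-1)))"
      unfolding i Tw_def wE n3 by simp
    also have "\<dots> = ?B * s ^ 0 * ?F1"
      by (rule PE0[OF s0']) (simp add: algebra_simps)
    finally show ?thesis .
  qed
  have f4: "Vm i j * q powi j = ?B * s ^ 1 * ?F0"
  proof -
    have "Vm i j * q powi j = s powi ((j + int m) * (j + int m)) * ?F0 * inverse (s powi (j * j)) * s powi (2 * j)"
      unfolding i Tw_def wE n4 qpowi by simp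
    also have "\<dots> = ?B * s ^ 1 * ?F0"
      by (rule PE1[OF s0']) (simp add: algebra_simps)
    finally show ?thesis .
  qed
  have h: "?F1 - s * ?F0 = s ^ (2*m+2) * ?F1 + Q * s ^ (2*m+1) * ?F0" by (rule hrec)
  have "Vm (i+1) j - Vm (i+1) (j+1) * (- Q * q powi j) = Vm (i+1) j + Q * (Vm (i+1) (j+1) * q powi j)"
    by (simp add: algebra_simps)
  also have "\<dots> = ?B * (s ^ (2*m+2) * ?F1 + Q * s ^ (2*m+1) * ?F0)"
    unfolding f1 f2 by (simp add: algebra_simps)
  also have "\<dots> = ?B * (?F1 - s * ?F0)" by (simp only: h)
  also have "\<dots> = Vm i (j-1) - Vm i j * q powi j"
    unfolding f3 f4 by (simp add: algebra_simps)
  finally show ?thesis .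
next
  case False
  show ?thesis
  proof (cases "j = i + 1")
    case True
    thus ?thesis using wf0 by (simp add: Tw_def ff0[OF sq q0 q1])
  next
    case False
    thus ?thesis using \<open>\<not> j \<le> i\<close> by (simp add: Tw_def)
  qed
qed

end



context
  fixes s q Q :: complex
  assumes sq: "s ^ 2 = q" and q0: "q \<noteq> 0" and q1: "cmod q < 1"
begin

abbreviation "wv \<equiv> (\<lambda>i::int. s ^ nat (i * i))"
abbreviation "V \<equiv> Tw wv (ff s q Q)"
abbreviation "aa \<equiv> (\<lambda>i. - Q * q powi (i - 1))"
abbreviation "ab \<equiv> (\<lambda>i. - Q * q powi i)"
abbreviation "R0 \<equiv> msub Lam (mdiag (\<lambda>i. q powi i))"
abbreviation "P1 \<equiv> msub mid (Msub aa)"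
abbreviation "P2 \<equiv> msub mid (Msub ab)"

lemma wv0: "wv k \<noteq> 0" using sq q0 by auto

lemma band_R0: "band 1 R0"
  by (rule band_msub[OF band_Lam band_mono[OF band_mdiag]]) simp

lemma band_P: "band 0 (msub mid (Msub a))"
  by (rule band_msub[OF band_mid band_Msub])

lemma I1: "mmul Lam (mmul V P1) = mmul V R0"
proof -
  have a: "mmul V P1 = msub V (mmul V (Msub aa))"
    by (simp add: mmul_msub_right[OF band_Tw band_mid band_Msub])
  have b: "mmul V R0 = msub (mmul V Lam) (mmul V (mdiag (\<lambda>i. q powi i)))"
    by (rule mmul_msub_right[OF band_Tw band_Lam band_mono[OF band_mdiag]]) simp
  show ?thesis unfolding a b
  proof (intro ext)
    fix i j
    have e: "V (i+1) j - V (i+1) (j+1) * (- Q * q powi j) = V i (j-1) - V i j * q powi j"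
      by (rule I1entry[OF sq q0 q1])
    show "mmul Lam (msub V (mmul V (Msub aa))) i j = msub (mmul V Lam) (mmul V (mdiag (\<lambda>i. q powi i))) i j"
      using e by (simp add: msub_def mmul_Lam_left mmul_Lam_right mmul_Msub_right mmul_diag_right)
  qed
qed

lemma I2: "mmul P2 R0 = mmul R0 P1"
proof -
  have a: "mmul P2 R0 = msub R0 (mmul (Msub ab) R0)"
    by (simp add: mmul_msub_left[OF band_R0 band_mid band_Msub])
  have b: "mmul R0 P1 = msub R0 (mmul R0 (Msub aa))"
    by (simp add: mmul_msub_right[OF band_R0 band_mid band_Msub])
  have "ab i * R0 (i - 1) j = R0 i (j + 1) * aa (j + 1)" for i j
  proof -
    consider "j = i" | "j = i - 1" | "j \<noteq> i \<and> j \<noteq> i - 1" by blast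
    thus ?thesis
    proof cases
      case 1 thus ?thesis by (simp add: msub_def Lam_def mdiag_def)
    next
      case 2 thus ?thesis by (simp add: msub_def Lam_def mdiag_def)
    next
      case 3 thus ?thesis by (auto simp: msub_def Lam_def mdiag_def)
    qed
  qed
  thus ?thesis unfolding a b
    by (intro ext) (simp add: msub_def mmul_Msub_left mmul_Msub_right)
qed

abbreviation "gm \<equiv> Abs_fps (cg s (inverse q))"
abbreviation "gp \<equiv> Abs_fps (cgp s (inverse q) Q)"

lemma W_eq: "Wmat s Q = Tw wv (inverse gp * inverse gm)"
proof -
  have l1: "linv (Gamma_minus' s Q) = Tw (\<lambda>_. 1) (inverse gp)"
    by (simp add: Gamma_minus'_Tw[OF sq q0 q1] linv_Tw)
  have l2: "linv (Gamma_minus s 1) = Tw (\<lambda>_. 1) (inverse gm)"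
    by (simp add: Gamma_minus_Tw[OF sq q0 q1] linv_Tw)
  have "Wmat s Q = mmul (mmul (mdiag wv) (mmul (Tw (\<lambda>_. 1) (inverse gp)) (Tw (\<lambda>_. 1) (inverse gm))))
                     (mdiag (\<lambda>i. inverse (wv i)))"
    unfolding Wmat_def l1 l2 qhalfsq_def qhalfsq_inv_def
    by (simp add: mmul_assoc[OF band_mdiag band_Tw band_Tw])
  also have "\<dots> = Tw wv (inverse gp * inverse gm)"
    by (simp add: Tw_mult mmul_diag_left mmul_diag_right) (auto intro!: ext simp: Tw_def)
  finally show ?thesis .
qed

lemma WVfacts: "mmul (Wmat s Q) V = mid \<and> mmul V (Wmat s Q) = mid \<and> linv (Wmat s Q) = V"
proof -
  have w: "\<And>k. wv k \<noteq> 0" by (rule wv0)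
  have e1: "(inverse gp * inverse gm) * ff s q Q = 1"
  proof -
    have "(inverse gp * inverse gm) * ff s q Q = (inverse gm * gm) * (inverse gp * gp)"
      by (simp add: ff_def[OF sq q0 q1] ac_simps)
    also have "\<dots> = 1" by (simp add: inverse_mult_eq_1)
    finally show ?thesis .
  qed
  have e2: "ff s q Q * (inverse gp * inverse gm) = 1" using e1 by (simp add: ac_simps)
  have a: "mmul (Wmat s Q) V = mid" unfolding W_eq by (subst Tw_mult[OF w]) (simp only: e1 Tw_one[OF w])
  have b: "mmul V (Wmat s Q) = mid" unfolding W_eq by (subst Tw_mult[OF w]) (simp only: e2 Tw_one[OF w])
  have c: "linv (Wmat s Q) = V"
    by (rule linv_eq) (simp_all add: a[unfolded W_eq] b[unfolded W_eq] lower_tri_band band_Tw W_eq)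
  show ?thesis using a b c by simp
qed

lemma main_ctx: "Lmat s Q = mmul R0 (Sm aa) \<and> Lmat s Q = mmul (Sm ab) R0"
proof -
  let ?W = "Wmat s Q" and ?V = "V" and ?L = "Lmat s Q"
  have bW: "band 0 ?W" unfolding W_eq by (rule band_Tw)
  have bV: "band 0 ?V" by (rule band_Tw)
  have bWL: "band 1 (mmul ?W Lam)" using band_mmul[OF bW band_Lam] by simp
  have L: "?L = mmul (mmul ?W Lam) ?V" unfolding Lmat_def using WVfacts by simp
  have WV: "mmul ?W ?V = mid" using WVfacts by simp
  have bL: "band 1 ?L" unfolding L using band_mmul[OF bWL bV] by simp
  have LP: "mmul ?L P1 = R0"
  proof -
    have "mmul ?L P1 = mmul (mmul ?W Lam) (mmul ?V P1)"
      unfolding L by (rule mmul_assoc[OF bWL bV band_P])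
    also have "\<dots> = mmul ?W (mmul Lam (mmul ?V P1))"
      by (rule mmul_assoc[OF bW band_Lam band_mmul[OF bV band_P]])
    also have "\<dots> = mmul ?W (mmul ?V R0)" by (simp only: I1)
    also have "\<dots> = mmul (mmul ?W ?V) R0"
      by (rule mmul_assoc[OF bW bV band_R0, symmetric])
    also have "\<dots> = R0" using WV by simp
    finally show ?thesis .
  qed
  have first: "?L = mmul R0 (Sm aa)"
  proof -
    have "?L = mmul ?L (mmul P1 (Sm aa))" by (simp add: Sm_left)
    also have "\<dots> = mmul (mmul ?L P1) (Sm aa)"
      by (rule mmul_assoc[OF bL band_P band_Sm, symmetric])
    finally show ?thesis using LP by simp
  qed
  have second: "mmul (Sm ab) R0 = mmul R0 (Sm aa)"
  proof -
    have "mmul (Sm ab) R0 = mmul (Sm ab) (mmul R0 (mmul P1 (Sm aa)))" by (simp add: Sm_left)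
    also have "\<dots> = mmul (Sm ab) (mmul (mmul R0 P1) (Sm aa))"
      by (simp only: mmul_assoc[OF band_R0 band_P band_Sm])
    also have "\<dots> = mmul (Sm ab) (mmul (mmul P2 R0) (Sm aa))" by (simp only: I2)
    also have "\<dots> = mmul (mmul (Sm ab) (mmul P2 R0)) (Sm aa)"
      by (rule mmul_assoc[OF band_Sm band_mmul[OF band_P band_R0] band_Sm, symmetric])
    also have "\<dots> = mmul (mmul (mmul (Sm ab) P2) R0) (Sm aa)"
      by (simp only: mmul_assoc[OF band_Sm band_P band_R0])
    also have "\<dots> = mmul R0 (Sm aa)" by (simp add: Sm_right)
    finally show ?thesis .
  qed
  show ?thesis using first second by simp
qed

end

theorem mainTheorem6:
  fixes q s Q :: complex
  assumes "s ^ 2 = q" and "0 < cmod q" and "cmod q < 1"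
    and "0 < cmod Q" and "cmod Q < 1"
  shows "Lmat s Q = mmul (msub Lam (mdiag (\<lambda>i. q powi i)))
            (mseries (\<lambda>n. mpow (mscale (- Q) (mmul (mdiag (\<lambda>i. q powi (i - 1))) Laminv)) n))
       \<and> Lmat s Q = mmul
            (mseries (\<lambda>n. mpow (mscale (- Q) (mmul (mdiag (\<lambda>i. q powi i)) Laminv)) n))
            (msub Lam (mdiag (\<lambda>i. q powi i)))"
proof -
  have q0: "q \<noteq> 0" using assms(2) by auto
  have M1: "mscale (- Q) (mmul (mdiag (\<lambda>i. q powi (i - 1))) Laminv) = Msub (\<lambda>i. - Q * q powi (i - 1))"
    by (rule M_Msub)
  have M2: "mscale (- Q) (mmul (mdiag (\<lambda>i. q powi i)) Laminv) = Msub (\<lambda>i. - Q * q powi i)"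
    by (rule M_Msub)
  show ?thesis unfolding M1 M2 mseries_Msub by (rule main_ctx[OF assms(1) q0 assms(3), where Q=Q])
qed

end
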